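(* Let $\mathbf{A}\in\mathbb{R}^{n\times d}$, $\mathbf{B}=[\mathbf{b}_1,\dots,\mathbf{b}_{d_B}]\in\mathbb{R}^{n\times d_B}$, $\mathbf{C}=[\mathbf{c}_1,\dots,\mathbf{c}_{n_C}]^{\rm T}\in\mathbb{R}^{n_C\times d}$, and let $k,r$ be integers with $1\le k\le\mathrm{rank}(\mathbf{B})$, $1\le r\le\mathrm{rank}(\mathbf{C})$. Then $$P_{k,r}(x;\mathbf{A},\mathbf{B},\mathbf{C})=\frac1k\sum_{i=1}^{d_B}\|\mathbf{b}_i\|^2P_{k-1,r}(x;\mathbf{Q}_{\{i\}}\mathbf{A},\mathbf{Q}_{\{i\}}\mathbf{B},\mathbf{C})$$ and $$P_{k,r}(x;\mathbf{A},\mathbf{B},\mathbf{C})=\frac1r\sum_{i=1}^{n_C}\|\mathbf{c}_i\|^2P_{k,r-1}(x;\mathbf{A}\mathbf{P}_{\{i\}},\mathbf{B},\mathbf{C}\mathbf{P}_{\{i\}}).$$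
   Context: Notation: $\mathbf{M}_{R,S}$, $\mathbf{M}_{:,S}$, $\mathbf{M}_{R,:}$ are submatrices; $\mathbf{M}^\dagger$ Moore–Penrose pseudoinverse with $\mathbf{M}_{R,S}^\dagger:=(\mathbf{M}_{R,S})^\dagger$; empty determinants are $1$ and $\mathbf{M}_{:,\emptyset}\mathbf{M}_{:,\emptyset}^\dagger$, $\mathbf{M}_{\emptyset,:}^\dagger\mathbf{M}_{\emptyset,:}$ are zero. $\mathbf{Q}_{\{i\}}=\mathbf{I}_n-\mathbf{b}_i\mathbf{b}_i^\dagger$ and $\mathbf{P}_{\{i\}}=\mathbf{I}_d-\mathbf{c}_i^{\rm T\dagger}\mathbf{c}_i^{\rm T}$ (i.e. $\mathbf{Q}_S=\mathbf{I}_n-\mathbf{B}_{:,S}\mathbf{B}_{:,S}^\dagger$, $\mathbf{P}_R=\mathbf{I}_d-\mathbf{C}_{R,:}^\dagger\mathbf{C}_{R,:}$ for singletons). For general $\mathbf{A}',\mathbf{B}',\mathbf{C}'$ of shapes $n\times d$, $n\times d_B$, $n_C\times d$: $p_{T,U}(x;\mathbf{A}',\mathbf{B}',\mathbf{C}')=\det[x\mathbf{I}_d-(\mathbf{Q}'_T\mathbf{A}'\mathbf{P}'_U)^{\rm T}(\mathbf{Q}'_T\mathbf{A}'\mathbf{P}'_U)]$ with $\mathbf{Q}'_T=\mathbf{I}_n-\mathbf{B}'_{:,T}\mathbf{B}'^\dagger_{:,T}$, $\mathbf{P}'_U=\mathbf{I}_d-\mathbf{C}'^\dagger_{U,:}\mathbf{C}'_{U,:}$,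 and $P_{k,r}(x;\mathbf{A}',\mathbf{B}',\mathbf{C}')=\sum_{U\subset[n_C],|U|=r}\sum_{T\subset[d_B],|T|=k}\det[\mathbf{C}'_{U,:}\mathbf{C}'^{\rm T}_{U,:}]\det[\mathbf{B}'^{\rm T}_{:,T}\mathbf{B}'_{:,T}]\,p_{T,U}(x;\mathbf{A}',\mathbf{B}',\mathbf{C}')$. *)

theory Defs
  imports "Jordan_Normal_Form.DL_Rank_Submatrix"
begin

definition pinv :: "real mat \<Rightarrow> real mat" where
  "pinv M = (THE X. X \<in> carrier_mat (dim_col M) (dim_row M) \<and>
      M * X * M = M \<and> X * M * X = X \<and>
      transpose_mat (M * X) = M * X \<and> transpose_mat (X * M) = X * M)"

text \<open>Column submatrix B_{:,T} and row submatrix C_{U,:} (indices are 0-based).\<close>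
definition colsub :: "real mat \<Rightarrow> nat set \<Rightarrow> real mat" where
  "colsub B T = submatrix B UNIV T"

definition rowsub :: "real mat \<Rightarrow> nat set \<Rightarrow> real mat" where
  "rowsub C U = submatrix C U UNIV"

definition projQ :: "real mat \<Rightarrow> nat set \<Rightarrow> real mat" where
  "projQ B T = 1\<^sub>m (dim_row B) - colsub B T * pinv (colsub B T)"

definition projP :: "real mat \<Rightarrow> nat set \<Rightarrow> real mat" where
  "projP C U = 1\<^sub>m (dim_col C) - pinv (rowsub C U) * rowsub C U"

definition pTU :: "nat set \<Rightarrow> nat set \<Rightarrow> real \<Rightarrow> real mat \<Rightarrow> real mat \<Rightarrow> real mat \<Rightarrow> real" where
  "pTU T U x A B C =
     (let M = projQ B T * A * projP C U
      in det (x \<cdot>\<^sub>m 1\<^sub>m (dim_col A) - transpose_mat M * M))"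

definition Pkr :: "nat \<Rightarrow> nat \<Rightarrow> real \<Rightarrow> real mat \<Rightarrow> real mat \<Rightarrow> real mat \<Rightarrow> real" where
  "Pkr k r x A B C =
     (\<Sum>U\<in>{U. U \<subseteq> {..<dim_row C} \<and> card U = r}.
       \<Sum>T\<in>{T. T \<subseteq> {..<dim_col B} \<and> card T = k}.
         det (rowsub C U * transpose_mat (rowsub C U)) *
         det (transpose_mat (colsub B T) * colsub B T) * pTU T U x A B C)"

end

theory Submission
  imports Defs
begin


lemma massoc: "dim_col (A::'a::semiring_0 mat) = dim_row B \<Longrightarrow> dim_col B = dim_row C \<Longrightarrow> A * B * C = A * (B * C)"
  by (rule assoc_mult_mat[of A "dim_row A" "dim_col A" B "dim_col B" C "dim_col C"], auto)

lemma smult_smult_m: "a \<cdot>\<^sub>m (b \<cdot>\<^sub>m (A::'a::comm_ring_1 mat)) = (a * b) \<cdot>\<^sub>m A"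
  by (rule eq_matI, auto)

lemma one_smult_m[simp]: "(1::'a::comm_ring_1) \<cdot>\<^sub>m A = A"
  by (rule eq_matI, auto)

lemma tmult: "dim_col (A::'a::comm_semiring_0 mat) = dim_row B \<Longrightarrow> transpose_mat (A * B) = transpose_mat B * transpose_mat A"
  by (rule transpose_mult[of A "dim_row A" "dim_col A" B "dim_col B"], auto)

definition invm :: "real mat \<Rightarrow> real mat" where
  "invm G = (1 / det G) \<cdot>\<^sub>m adj_mat G"

lemma invm_dim[simp]: "dim_row (invm G) = dim_row G" "dim_col (invm G) = dim_col G"
  unfolding invm_def adj_mat_def by auto

lemma col_mult_gen: "c < dim_col B \<Longrightarrow> col (A * B) c = A *\<^sub>v col B c"
  by (rule eq_vecI, auto)

lemma invm:
  assumes G: "G \<in> carrier_mat t t" and d: "det G \<noteq> 0"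
  shows "invm G \<in> carrier_mat t t" "invm G * G = 1\<^sub>m t" "G * invm G = 1\<^sub>m t"
proof -
  show c: "invm G \<in> carrier_mat t t" unfolding invm_def using adj_mat(1)[OF G] by simp
  have "invm G * G = (1 / det G) \<cdot>\<^sub>m (adj_mat G * G)"
    unfolding invm_def using adj_mat(1)[OF G] G by (simp add: mult_smult_assoc_mat)
  also have "\<dots> = 1\<^sub>m t" using adj_mat(3)[OF G] d by (simp add: smult_smult_m)
  finally show "invm G * G = 1\<^sub>m t" .
  have "G * invm G = (1 / det G) \<cdot>\<^sub>m (G * adj_mat G)"
    unfolding invm_def using adj_mat(1)[OF G] G by (simp add: mult_smult_distrib)
  also have "\<dots> = 1\<^sub>m t" using adj_mat(2)[OF G] d by (simp add: smult_smult_m)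
  finally show "G * invm G = 1\<^sub>m t" .
qed

lemma invm_sym:
  assumes G: "G \<in> carrier_mat t t" and d: "det G \<noteq> 0" and s: "transpose_mat G = G"
  shows "transpose_mat (invm G) = invm G"
proof -
  note I = invm[OF G d]
  have [simp]: "dim_row G = t" "dim_col G = t" using G by auto
  have "transpose_mat (invm G) * G = transpose_mat (G * invm G)"
    using I G s by (metis transpose_mult)
  also have "\<dots> = 1\<^sub>m t" using I by simp
  finally have 1: "transpose_mat (invm G) * G = 1\<^sub>m t" .
  have "transpose_mat (invm G) = transpose_mat (invm G) * (G * invm G)" using I by simp
  also have "\<dots> = (transpose_mat (invm G) * G) * invm G" using I G by (simp add: massoc)
  also have "\<dots> = invm G" using 1 I by simp
  finally show ?thesis .
qed

lemma pinv_col: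
  assumes M: "M \<in> carrier_mat m t" and d: "det (transpose_mat M * M) \<noteq> 0"
  shows "pinv M = invm (transpose_mat M * M) * transpose_mat M"
proof -
  define G where "G = transpose_mat M * M"
  define Gi where "Gi = invm G"
  have G: "G \<in> carrier_mat t t" unfolding G_def using M by auto
  have dG: "det G \<noteq> 0" using d unfolding G_def .
  have Gs: "transpose_mat G = G" unfolding G_def using M by (simp add: transpose_mult[of _ t m])
  note I = invm[OF G dG, folded Gi_def]
  have Gis: "transpose_mat Gi = Gi" unfolding Gi_def by (rule invm_sym[OF G dG Gs])
  have dims[simp]: "dim_row M = m" "dim_col M = t" "dim_row G = t" "dim_col G = t"
     "dim_row Gi = t" "dim_col Gi = t" using M G I by auto
  define X0 where "X0 = Gi * transpose_mat M"
  have X0c: "X0 \<in> carrier_mat t m" unfolding X0_def by auto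
  hence dX0[simp]: "dim_row X0 = t" "dim_col X0 = m" by auto
  let ?P = "\<lambda>X. X \<in> carrier_mat (dim_col M) (dim_row M) \<and>
      M * X * M = M \<and> X * M * X = X \<and>
      transpose_mat (M * X) = M * X \<and> transpose_mat (X * M) = X * M"
  have XM: "X0 * M = 1\<^sub>m t" unfolding X0_def using I(2) by (simp add: massoc G_def)
  have "?P X0"
  proof (intro conjI)
    show "X0 \<in> carrier_mat (dim_col M) (dim_row M)" using X0c by simp
    show "M * X0 * M = M" using XM by (simp add: massoc)
    show "X0 * M * X0 = X0" using XM by simp
    show "transpose_mat (M * X0) = M * X0" unfolding X0_def
      by (simp add: tmult Gis massoc)
    show "transpose_mat (X0 * M) = X0 * M" using XM by simp
  qed
  moreover have "X = X0" if PX: "?P X" for X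
  proof -
    have Xc: "X \<in> carrier_mat t m" using PX by simp
    have dX[simp]: "dim_row X = t" "dim_col X = m" using Xc by auto
    have e1: "M * X * M = M" and e3: "transpose_mat (M * X) = M * X" using PX by auto
    have "G * X = transpose_mat M * (M * X)" unfolding G_def by (simp add: massoc)
    also have "\<dots> = transpose_mat M * transpose_mat (M * X)" using e3 by simp
    also have "\<dots> = transpose_mat (M * X * M)"
      by (simp add: tmult massoc)
    also have "\<dots> = transpose_mat M" using e1 by simp
    finally have GX: "G * X = transpose_mat M" .
    have "X = (Gi * G) * X" using I by simp
    also have "\<dots> = Gi * transpose_mat M" by (simp add: massoc GX)
    finally show ?thesis unfolding X0_def .
  qed
  ultimately have "pinv M = X0" unfolding pinv_def by (intro the_equality) blast+
  thus ?thesis unfolding X0_def Gi_def G_def .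
qed

lemma pinv_row:
  assumes M: "M \<in> carrier_mat m t" and d: "det (M * transpose_mat M) \<noteq> 0"
  shows "pinv M = transpose_mat M * invm (M * transpose_mat M)"
proof -
  define G where "G = M * transpose_mat M"
  define Gi where "Gi = invm G"
  have G: "G \<in> carrier_mat m m" unfolding G_def using M by auto
  have dG: "det G \<noteq> 0" using d unfolding G_def .
  have Gs: "transpose_mat G = G" unfolding G_def using M by (simp add: tmult)
  note I = invm[OF G dG, folded Gi_def]
  have Gis: "transpose_mat Gi = Gi" unfolding Gi_def by (rule invm_sym[OF G dG Gs])
  have dims[simp]: "dim_row M = m" "dim_col M = t" "dim_row G = m" "dim_col G = m"
     "dim_row Gi = m" "dim_col Gi = m" using M G I by auto
  define X0 where "X0 = transpose_mat M * Gi"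
  have X0c: "X0 \<in> carrier_mat t m" unfolding X0_def by auto
  hence dX0[simp]: "dim_row X0 = t" "dim_col X0 = m" by auto
  let ?P = "\<lambda>X. X \<in> carrier_mat (dim_col M) (dim_row M) \<and>
      M * X * M = M \<and> X * M * X = X \<and>
      transpose_mat (M * X) = M * X \<and> transpose_mat (X * M) = X * M"
  have MX: "M * X0 = 1\<^sub>m m" unfolding X0_def using I(3) by (simp add: massoc[symmetric] G_def)
  have "?P X0"
  proof (intro conjI)
    show "X0 \<in> carrier_mat (dim_col M) (dim_row M)" using X0c by simp
    show "M * X0 * M = M" using MX by (simp add: massoc)
    show "X0 * M * X0 = X0" using MX by (simp add: massoc)
    show "transpose_mat (X0 * M) = X0 * M" unfolding X0_def
      by (simp add: tmult Gis massoc)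
    show "transpose_mat (M * X0) = M * X0" using MX by simp
  qed
  moreover have "X = X0" if PX: "?P X" for X
  proof -
    have Xc: "X \<in> carrier_mat t m" using PX by simp
    have dX[simp]: "dim_row X = t" "dim_col X = m" using Xc by auto
    have e1: "M * X * M = M" and e3: "transpose_mat (X * M) = X * M" using PX by auto
    have "X * G = (X * M) * transpose_mat M" unfolding G_def by (simp add: massoc)
    also have "\<dots> = transpose_mat (X * M) * transpose_mat M" using e3 by simp
    also have "\<dots> = transpose_mat (M * X * M)"
      by (simp add: tmult massoc)
    also have "\<dots> = transpose_mat M" using e1 by simp
    finally have GX: "X * G = transpose_mat M" .
    have "X = X * (G * Gi)" using I by simp
    also have "\<dots> = transpose_mat M * Gi" by (simp add: massoc[symmetric] GX)
    finally show ?thesis unfolding X0_def .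
  qed
  ultimately have "pinv M = X0" unfolding pinv_def by (intro the_equality) blast+
  thus ?thesis unfolding X0_def Gi_def G_def .
qed


lemma colsub_dim[simp]: "dim_row (colsub B S) = dim_row B"
  "dim_col (colsub B S) = card {j. j < dim_col B \<and> j \<in> S}"
  unfolding colsub_def dim_submatrix by auto

lemma card_sub: "S \<subseteq> {..<m} \<Longrightarrow> card {j. j < m \<and> j \<in> S} = card S"
  by (rule arg_cong[of _ _ card], auto)

lemma colsub_pick_lt: "c < dim_col (colsub B S) \<Longrightarrow> pick S c < dim_col B"
  by (rule pick_le, simp)

lemma colsub_index[simp]: "r < dim_row B \<Longrightarrow> c < dim_col (colsub B S) \<Longrightarrow>
   colsub B S $$ (r, c) = B $$ (r, pick S c)"
  unfolding colsub_def by (subst submatrix_index, auto simp: dim_submatrix pick_UNIV)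

lemma col_colsub: "c < dim_col (colsub B S) \<Longrightarrow> col (colsub B S) c = col B (pick S c)"
  by (rule eq_vecI, auto simp: colsub_pick_lt)

lemma colsub_mult: "dim_col Q = dim_row B \<Longrightarrow> colsub (Q * B) S = Q * colsub B S"
proof (rule eq_matI)
  fix i j assume Q: "dim_col Q = dim_row B" and i: "i < dim_row (Q * colsub B S)" and j: "j < dim_col (Q * colsub B S)"
  have p: "pick S j < dim_col B" using j by (auto intro: pick_le)
  show "colsub (Q * B) S $$ (i, j) = (Q * colsub B S) $$ (i, j)"
    using i j Q p by (simp add: col_colsub)
qed auto

lemma mminus_self[simp]: "(A::'a::ab_group_add mat) - A = 0\<^sub>m (dim_row A) (dim_col A)"
  by (rule eq_matI, auto)

lemma mminus_zero[simp]: "dim_row A = r \<Longrightarrow> dim_col A = c \<Longrightarrow> (A::'a::ab_group_add mat) - 0\<^sub>m r c = A"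
  by (rule eq_matI, auto)

lemma mdistr_r: "dim_row A = dim_row B \<Longrightarrow> dim_col A = dim_col B \<Longrightarrow> dim_col A = dim_row C \<Longrightarrow>
   ((A::'a::ring mat) - B) * C = A * C - B * C"
  by (rule minus_mult_distrib_mat[of A "dim_row A" "dim_col A" B C "dim_col C"], auto)

lemma mdistr_l: "dim_col A = dim_row B \<Longrightarrow> dim_row B = dim_row C \<Longrightarrow> dim_col B = dim_col C \<Longrightarrow>
   (A::'a::ring mat) * (B - C) = A * B - A * C"
  by (rule mult_minus_distrib_mat[of A "dim_row A" "dim_col A" B "dim_col B" C], auto)

lemma mtminus: "dim_row A = dim_row B \<Longrightarrow> dim_col A = dim_col B \<Longrightarrow>
   transpose_mat ((A::'a::ab_group_add mat) - B) = transpose_mat A - transpose_mat B"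
  by (rule transpose_minus[of A "dim_row A" "dim_col A"], auto)

definition prj :: "real mat \<Rightarrow> real mat" where
  "prj N = 1\<^sub>m (dim_row N) - N * (invm (transpose_mat N * N) * transpose_mat N)"

definition gram :: "real mat \<Rightarrow> nat set \<Rightarrow> real" where
  "gram B S = det (transpose_mat (colsub B S) * colsub B S)"

lemma projQ_prj: "gram B T \<noteq> 0 \<Longrightarrow> projQ B T = prj (colsub B T)"
  unfolding projQ_def prj_def gram_def
  by (subst pinv_col[of _ "dim_row B" "card {j. j < dim_col B \<and> j \<in> T}"], auto)

lemma prj_props:
  assumes N: "N \<in> carrier_mat n t" and d: "det (transpose_mat N * N) \<noteq> 0"
  shows "prj N \<in> carrier_mat n n" "transpose_mat (prj N) = prj N"
    "prj N * N = 0\<^sub>m n t" "prj N * prj N = prj N"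
proof -
  define G where "G = transpose_mat N * N"
  define Gi where "Gi = invm G"
  have G: "G \<in> carrier_mat t t" unfolding G_def using N by auto
  have dG: "det G \<noteq> 0" using d unfolding G_def .
  have Gs: "transpose_mat G = G" unfolding G_def using N by (simp add: tmult)
  note I = invm[OF G dG, folded Gi_def]
  have Gis: "transpose_mat Gi = Gi" unfolding Gi_def by (rule invm_sym[OF G dG Gs])
  have dims[simp]: "dim_row N = n" "dim_col N = t" "dim_row G = t" "dim_col G = t"
     "dim_row Gi = t" "dim_col Gi = t" using N G I by auto
  define X where "X = N * (Gi * transpose_mat N)"
  have dX[simp]: "dim_row X = n" "dim_col X = n" unfolding X_def by auto
  have P: "prj N = 1\<^sub>m n - X" unfolding prj_def X_def Gi_def G_def by simp
  show c: "prj N \<in> carrier_mat n n" unfolding P by auto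
  have Xs: "transpose_mat X = X" unfolding X_def by (simp add: tmult Gis massoc)
  show s: "transpose_mat (prj N) = prj N" unfolding P by (simp add: mtminus Xs)
  have XN: "X * N = N" unfolding X_def using I(2) by (simp add: massoc G_def[symmetric])
  show PN: "prj N * N = 0\<^sub>m n t" unfolding P by (simp add: mdistr_r XN)
  have "prj N * prj N = prj N * 1\<^sub>m n - prj N * X" by (subst (2) P, rule mdistr_l, auto simp: P)
  also have "prj N * X = (prj N * N) * (Gi * transpose_mat N)" unfolding X_def using c by (simp add: massoc)
  also have "\<dots> = 0\<^sub>m n n" unfolding PN by simp
  finally show "prj N * prj N = prj N" using c by simp
qed


lemma kills_iff:
  assumes Q: "dim_col Q = dim_row B"
  shows "Q * colsub B S = 0\<^sub>m (dim_row Q) (dim_col (colsub B S)) \<longleftrightarrow>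
     (\<forall>j\<in>S. j < dim_col B \<longrightarrow> Q *\<^sub>v col B j = 0\<^sub>v (dim_row Q))"
proof
  assume z: "Q * colsub B S = 0\<^sub>m (dim_row Q) (dim_col (colsub B S))"
  show "\<forall>j\<in>S. j < dim_col B \<longrightarrow> Q *\<^sub>v col B j = 0\<^sub>v (dim_row Q)"
  proof (intro ballI impI)
    fix j assume jS: "j \<in> S" and j: "j < dim_col B"
    define c where "c = card {a\<in>S. a < j}"
    have pc: "pick S c = j" unfolding c_def by (rule pick_card_in_set[OF jS])
    have "{a\<in>S. a < j} \<subset> {a. a < dim_col B \<and> a \<in> S}" using jS j by auto
    hence cl: "c < dim_col (colsub B S)" unfolding c_def by (simp add: psubset_card_mono)
    have "Q *\<^sub>v col B j = Q *\<^sub>v col (colsub B S) c" using col_colsub[OF cl] pc by simp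
    also have "\<dots> = col (Q * colsub B S) c" using cl by (simp add: col_mult_gen)
    also have "\<dots> = 0\<^sub>v (dim_row Q)" unfolding z using cl by (intro eq_vecI, auto)
    finally show "Q *\<^sub>v col B j = 0\<^sub>v (dim_row Q)" .
  qed
next
  assume k: "\<forall>j\<in>S. j < dim_col B \<longrightarrow> Q *\<^sub>v col B j = 0\<^sub>v (dim_row Q)"
  show "Q * colsub B S = 0\<^sub>m (dim_row Q) (dim_col (colsub B S))"
  proof (rule eq_matI)
    fix r c assume r: "r < dim_row (0\<^sub>m (dim_row Q) (dim_col (colsub B S)))"
      and c: "c < dim_col (0\<^sub>m (dim_row Q) (dim_col (colsub B S)))"
    have cl: "c < dim_col (colsub B S)" using c by simp
    have p: "pick S c < dim_col B" by (rule colsub_pick_lt[OF cl])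
    have pS: "pick S c \<in> S" using cl by (intro pick_in_set, simp, metis (no_types, lifting) card_mono finite_nat_set_iff_bounded mem_Collect_eq not_le order.strict_trans2 subsetI)
    have "(Q * colsub B S) $$ (r, c) = (Q *\<^sub>v col B (pick S c)) $ r"
      using r cl by (simp add: col_colsub)
    also have "\<dots> = 0" using k pS p r by simp
    finally show "(Q * colsub B S) $$ (r, c) = 0\<^sub>m (dim_row Q) (dim_col (colsub B S)) $$ (r, c)"
      using r c by simp
  qed auto
qed

lemma prj_absorb:
  assumes P: "P \<in> carrier_mat n n" and Nx: "Nx \<in> carrier_mat n t" and z: "P * Nx = 0\<^sub>m n t"
  shows "P * prj Nx = P"
proof -
  have "P * prj Nx = P * 1\<^sub>m n - P * (Nx * (invm (transpose_mat Nx * Nx) * transpose_mat Nx))"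
    unfolding prj_def using P Nx by (subst mdistr_l, auto)
  also have "P * (Nx * (invm (transpose_mat Nx * Nx) * transpose_mat Nx)) = (P * Nx) * (invm (transpose_mat Nx * Nx) * transpose_mat Nx)"
    using P Nx by (simp add: massoc)
  also have "\<dots> = 0\<^sub>m n n" unfolding z using Nx by (simp add: )
  finally show ?thesis using P by simp
qed

lemma prj_absorb2:
  assumes R: "R \<in> carrier_mat n n" and Rs: "transpose_mat R = R" and Nx: "Nx \<in> carrier_mat n t" and z: "R * Nx = 0\<^sub>m n t"
  shows "prj Nx * R = R"
proof -
  have "prj Nx * R = 1\<^sub>m n * R - (Nx * (invm (transpose_mat Nx * Nx) * transpose_mat Nx)) * R"
    unfolding prj_def using R Nx by (subst mdistr_r, auto)
  also have "(Nx * (invm (transpose_mat Nx * Nx) * transpose_mat Nx)) * R = Nx * (invm (transpose_mat Nx * Nx) * (transpose_mat Nx * R))"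
    using R Nx by (simp add: massoc)
  also have "transpose_mat Nx * R = transpose_mat (R * Nx)" using R Nx by (simp add: tmult Rs)
  also have "\<dots> = 0\<^sub>m t n" unfolding z by simp
  finally show ?thesis using R Nx by (simp add: )
qed

lemma prj_comm:
  assumes P: "P \<in> carrier_mat n n" and Ps: "transpose_mat P = P" and Nx: "Nx \<in> carrier_mat n t" and e: "P * Nx = Nx"
  shows "P * prj Nx = prj Nx * P"
proof -
  define Y where "Y = invm (transpose_mat Nx * Nx) * transpose_mat Nx"
  have Y: "Y \<in> carrier_mat t n" unfolding Y_def using Nx by auto
  have YP: "Y * P = Y"
  proof -
    have "transpose_mat Nx * P = transpose_mat (P * Nx)" using P Nx by (simp add: tmult Ps)
    hence "transpose_mat Nx * P = transpose_mat Nx" using e by simp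
    thus ?thesis unfolding Y_def using Nx P by (simp add: massoc)
  qed
  have "P * prj Nx = P * 1\<^sub>m n - P * (Nx * Y)"
    unfolding prj_def Y_def[symmetric] using P Nx Y by (subst mdistr_l, auto)
  also have "P * (Nx * Y) = Nx * Y" using P Nx Y e by (simp add: massoc[symmetric])
  also have "Nx * Y = Nx * Y * P" using Nx Y YP P by (simp add: massoc)
  also have "P * 1\<^sub>m n = 1\<^sub>m n * P" using P by simp
  also have "1\<^sub>m n * P - Nx * Y * P = (1\<^sub>m n - Nx * Y) * P" using P Nx Y by (subst mdistr_r, auto)
  also have "1\<^sub>m n - Nx * Y = prj Nx" unfolding prj_def Y_def using Nx by simp
  finally show ?thesis .
qed


lemma det_zero_col:
  assumes A: "(A::real mat) \<in> carrier_mat k k" and p: "p < k" and z: "\<And>r. r < k \<Longrightarrow> A $$ (r, p) = 0"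
  shows "det A = 0"
  using laplace_expansion_column[OF A p] z by simp

definition ins :: "nat \<Rightarrow> nat \<Rightarrow> nat" where "ins p a = (if a < p then a else Suc a)"

lemma mat_delete_ins: "a < dim_row A - 1 \<Longrightarrow> c < dim_col A - 1 \<Longrightarrow>
  mat_delete A p q $$ (a, c) = A $$ (ins p a, ins q c)"
  unfolding mat_delete_def ins_def by auto

lemma det_schur1:
  assumes G: "(G::real mat) \<in> carrier_mat k k" and p: "p < k" and b: "G $$ (p,p) = \<beta>" "\<beta> \<noteq> 0"
    and G': "G' \<in> carrier_mat (k-1) (k-1)"
    and e: "\<And>a c. a < k - 1 \<Longrightarrow> c < k - 1 \<Longrightarrow>
       G' $$ (a,c) = G $$ (ins p a, ins p c) - G $$ (ins p a, p) * G $$ (p, ins p c) / \<beta>"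
  shows "det G = \<beta> * det G'"
proof -
  define L where "L = mat k k (\<lambda>(r,c). if r = c then 1 else if c = p then - G $$ (r,p) / \<beta> else (0::real))"
  have Lc: "L \<in> carrier_mat k k" unfolding L_def by auto
  have "det L = (\<Sum>j<k. L $$ (p,j) * cofactor L p j)" by (rule laplace_expansion_row[OF Lc p])
  also have "\<dots> = (\<Sum>j<k. (if j = p then cofactor L p p else 0))"
    by (rule sum.cong, auto simp: L_def p)
  also have "\<dots> = cofactor L p p" using p by simp
  also have "\<dots> = det (mat_delete L p p)" unfolding cofactor_def by simp
  also have "mat_delete L p p = 1\<^sub>m (k - 1)"
  proof (rule eq_matI)
    fix a c assume a: "a < dim_row (1\<^sub>m (k - 1))" and c: "c < dim_col (1\<^sub>m (k - 1))"
    have ia: "ins p a < k" "ins p c < k" "ins p c \<noteq> p" using a c p by (auto simp: ins_def)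
    have "(ins p a = ins p c) = (a = c)" by (auto simp: ins_def)
    then show "mat_delete L p p $$ (a, c) = 1\<^sub>m (k - 1) $$ (a, c)"
      using a c ia Lc by (subst mat_delete_ins, auto simp: L_def)
  qed (auto simp: L_def)
  finally have dL: "det L = 1" by simp
  define G1 where "G1 = L * G"
  have G1c: "G1 \<in> carrier_mat k k" unfolding G1_def using Lc G by auto
  have "det G1 = det L * det G" unfolding G1_def by (rule det_mult[OF Lc G])
  hence dG1: "det G1 = det G" using dL by simp
  have G1e: "G1 $$ (r, c) = G $$ (r, c) - (if r = p then 0 else G $$ (r,p) / \<beta> * G $$ (p, c))"
    if r: "r < k" and c: "c < k" for r c
  proof -
    have "G1 $$ (r, c) = (\<Sum>l<k. L $$ (r, l) * G $$ (l, c))"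
      unfolding G1_def using r c Lc G by (simp add: scalar_prod_def atLeast0LessThan)
    also have "\<dots> = (\<Sum>l<k. (if l = r then G $$ (r, c) else 0) +
         (if l = p \<and> r \<noteq> p then - G $$ (r,p) / \<beta> * G $$ (p, c) else 0))"
      by (rule sum.cong, auto simp: L_def r)
    also have "\<dots> = G $$ (r, c) - (if r = p then 0 else G $$ (r,p) / \<beta> * G $$ (p, c))"
      using r p by (simp add: sum.distrib)
    finally show ?thesis .
  qed
  have "det G1 = (\<Sum>r<k. G1 $$ (r,p) * cofactor G1 r p)" by (rule laplace_expansion_column[OF G1c p])
  also have "\<dots> = (\<Sum>r<k. (if r = p then \<beta> * cofactor G1 p p else 0))"
    by (rule sum.cong, auto simp: G1e p b)
  also have "\<dots> = \<beta> * det (mat_delete G1 p p)" using p by (simp add: cofactor_def)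
  also have "mat_delete G1 p p = G'"
  proof (rule eq_matI)
    fix a c assume a: "a < dim_row G'" and c: "c < dim_col G'"
    have ia: "ins p a < k" "ins p c < k" "ins p a \<noteq> p" using a c p G' by (auto simp: ins_def)
    show "mat_delete G1 p p $$ (a, c) = G' $$ (a, c)"
      using a c ia G' G1c by (subst mat_delete_ins, auto simp: G1e e)
  qed (use G' G1c in auto)
  finally show ?thesis using dG1 by simp
qed


lemma sp_self_zero:
  assumes b: "(b::real vec) \<in> carrier_vec n" and z: "b \<bullet> b = 0"
  shows "b = 0\<^sub>v n"
proof -
  have "(\<Sum>r\<in>{0..<n}. b $ r * b $ r) = 0" using z b unfolding scalar_prod_def by simp
  hence "\<forall>r\<in>{0..<n}. b $ r * b $ r = 0" by (subst (asm) sum_nonneg_eq_0_iff, auto)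
  show ?thesis
  proof (rule eq_vecI)
    fix r assume r: "r < dim_vec (0\<^sub>v n :: real vec)"
    hence "b $ r * b $ r = 0" using \<open>\<forall>r\<in>{0..<n}. b $ r * b $ r = 0\<close> by simp
    thus "b $ r = 0\<^sub>v n $ r" using r by simp
  qed (use b in simp)
qed

lemma pick_single: "pick {i} 0 = i"
  by (simp, rule Least_equality, auto)

lemma colsub_single: assumes B: "B \<in> carrier_mat n dB" and i: "i < dB"
  shows "colsub B {i} \<in> carrier_mat n 1" "\<And>r. r < n \<Longrightarrow> colsub B {i} $$ (r, 0) = B $$ (r, i)"
proof -
  have e: "{j. j < dim_col B \<and> j \<in> {i}} = {i}" using B i by auto
  have dc: "dim_col (colsub B {i}) = 1" by (simp only: colsub_dim e, simp)
  have dr: "dim_row (colsub B {i}) = n" using B by simp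
  show c: "colsub B {i} \<in> carrier_mat n 1" by (rule carrier_matI[OF dr dc])
  fix r assume r: "r < n"
  have "colsub B {i} $$ (r, 0) = B $$ (r, pick {i} 0)"
  proof (rule colsub_index)
    show "r < dim_row B" using r B by simp
    show "0 < dim_col (colsub B {i})" unfolding dc by simp
  qed
  thus "colsub B {i} $$ (r, 0) = B $$ (r, i)" by (simp only: pick_single)
qed

lemma tt_entry: "(X::real mat) \<in> carrier_mat n 1 \<Longrightarrow>
  (transpose_mat X * X) $$ (0,0) = (\<Sum>r\<in>{0..<n}. X $$ (r,0) * X $$ (r,0))"
  by (subst index_mult_mat(1), auto simp: scalar_prod_def)

lemma det_tt1: "(X::real mat) \<in> carrier_mat n 1 \<Longrightarrow> det (transpose_mat X * X) = (transpose_mat X * X) $$ (0,0)"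
  by (rule det_single, auto)

lemma gram_single: assumes B: "B \<in> carrier_mat n dB" and i: "i < dB"
  shows "gram B {i} = col B i \<bullet> col B i"
proof -
  note c = colsub_single[OF B i]
  have "gram B {i} = (transpose_mat (colsub B {i}) * colsub B {i}) $$ (0,0)"
    unfolding gram_def by (rule det_tt1[OF c(1)])
  also have "\<dots> = (\<Sum>r\<in>{0..<n}. colsub B {i} $$ (r,0) * colsub B {i} $$ (r,0))"
    by (rule tt_entry[OF c(1)])
  also have "\<dots> = (\<Sum>r\<in>{0..<n}. B $$ (r,i) * B $$ (r,i))"
  proof (rule sum.cong[OF refl])
    fix r assume "r \<in> {0..<n}" hence "r < n" by simp
    from c(2)[OF this] show "colsub B {i} $$ (r, 0) * colsub B {i} $$ (r, 0) = B $$ (r, i) * B $$ (r, i)"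
      by (simp only:)
  qed
  also have "\<dots> = col B i \<bullet> col B i" using B i
    unfolding scalar_prod_def by (intro sum.cong, simp_all)
  finally show ?thesis .
qed


lemma mult1_entry: "(A::real mat) \<in> carrier_mat n 1 \<Longrightarrow> B \<in> carrier_mat 1 m \<Longrightarrow> r < n \<Longrightarrow> s < m \<Longrightarrow>
  (A * B) $$ (r, s) = A $$ (r,0) * B $$ (0,s)"
  by (simp add: scalar_prod_def)

lemma prj_col_entry:
  assumes X: "(X::real mat) \<in> carrier_mat n 1" and b: "(transpose_mat X * X) $$ (0,0) = \<beta>" "\<beta> \<noteq> 0"
    and r: "r < n" and s: "s < n"
  shows "prj X $$ (r, s) = (if r = s then 1 else 0) - X $$ (r,0) * X $$ (s,0) / \<beta>"
proof -
  define G where "G = transpose_mat X * X"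
  have G: "G \<in> carrier_mat 1 1" unfolding G_def using X by auto
  have dG: "det G = \<beta>" using det_single[OF G] b unfolding G_def by simp
  have md: "mat_delete G 0 0 \<in> carrier_mat 0 0" using mat_delete_carrier[OF G] by simp
  have "invm G $$ (0,0) = 1 / \<beta> * cofactor G 0 0" unfolding invm_def adj_mat_def using G dG by simp
  also have "cofactor G 0 0 = 1" unfolding cofactor_def using md by simp
  finally have Gi: "invm G $$ (0,0) = 1 / \<beta>" by simp
  have Gic: "invm G \<in> carrier_mat 1 1" using invm(1)[OF G] dG b by simp
  have XT: "transpose_mat X \<in> carrier_mat 1 n" using X by simp
  have Y: "invm G * transpose_mat X \<in> carrier_mat 1 n" using Gic XT by simp
  have "(X * (invm G * transpose_mat X)) $$ (r, s) = X $$ (r,0) * (invm G * transpose_mat X) $$ (0, s)"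
    by (rule mult1_entry[OF X Y r s])
  also have "(invm G * transpose_mat X) $$ (0, s) = invm G $$ (0,0) * transpose_mat X $$ (0, s)"
    by (rule mult1_entry[OF Gic XT _ s], simp)
  also have "transpose_mat X $$ (0, s) = X $$ (s, 0)" using X s by simp
  finally have "(X * (invm G * transpose_mat X)) $$ (r, s) = X $$ (r,0) * X $$ (s,0) / \<beta>" using Gi by simp
  moreover have "prj X $$ (r, s) = 1\<^sub>m n $$ (r, s) - (X * (invm G * transpose_mat X)) $$ (r, s)"
    unfolding prj_def G_def[symmetric] using X r s Y by simp
  ultimately show ?thesis using r s by simp
qed


lemma sp_formula:
  fixes u w b :: "real vec"
  assumes u: "u \<in> carrier_vec n" and w: "w \<in> carrier_vec n" and b: "b \<in> carrier_vec n"
    and bb: "b \<bullet> b = \<beta>" and nz: "\<beta> \<noteq> 0"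
  shows "(u - ((b \<bullet> u) / \<beta>) \<cdot>\<^sub>v b) \<bullet> (w - ((b \<bullet> w) / \<beta>) \<cdot>\<^sub>v b) = u \<bullet> w - (b \<bullet> u) * (b \<bullet> w) / \<beta>"
proof -
  define x where "x = (b \<bullet> u) / \<beta>"
  define y where "y = (b \<bullet> w) / \<beta>"
  have ub: "u \<bullet> b = b \<bullet> u" using comm_scalar_prod[OF u b] .
  have "(u - x \<cdot>\<^sub>v b) \<bullet> (w - y \<cdot>\<^sub>v b) = u \<bullet> (w - y \<cdot>\<^sub>v b) - (x \<cdot>\<^sub>v b) \<bullet> (w - y \<cdot>\<^sub>v b)"
    using u w b by (subst minus_scalar_prod_distrib, auto)
  also have "u \<bullet> (w - y \<cdot>\<^sub>v b) = u \<bullet> w - y * (u \<bullet> b)"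
    using u w b by (subst scalar_prod_minus_distrib, auto)
  also have "(x \<cdot>\<^sub>v b) \<bullet> (w - y \<cdot>\<^sub>v b) = x * (b \<bullet> w) - x * y * (b \<bullet> b)"
    using u w b by (subst scalar_prod_minus_distrib, auto)
  finally have "(u - x \<cdot>\<^sub>v b) \<bullet> (w - y \<cdot>\<^sub>v b) = u \<bullet> w - y * (b \<bullet> u) - (x * (b \<bullet> w) - x * y * \<beta>)"
    using ub bb by simp
  also have "\<dots> = u \<bullet> w - (b \<bullet> u) * (b \<bullet> w) / \<beta>" unfolding x_def y_def using nz
    by (simp add: field_simps)
  finally show ?thesis unfolding x_def y_def .
qed

lemma Qi_facts:
  assumes B: "B \<in> carrier_mat n dB" and i: "i < dB" and nz: "col B i \<bullet> col B i \<noteq> 0"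
  shows "projQ B {i} \<in> carrier_mat n n"
    "\<And>u. u \<in> carrier_vec n \<Longrightarrow> projQ B {i} *\<^sub>v u = u - ((col B i \<bullet> u) / (col B i \<bullet> col B i)) \<cdot>\<^sub>v col B i"
    "projQ B {i} *\<^sub>v col B i = 0\<^sub>v n"
proof -
  define \<beta> where "\<beta> = col B i \<bullet> col B i"
  define X where "X = colsub B {i}"
  note c = colsub_single[OF B i, folded X_def]
  have g: "gram B {i} = \<beta>" unfolding \<beta>_def by (rule gram_single[OF B i])
  have XX: "(transpose_mat X * X) $$ (0,0) = \<beta>" using det_tt1[OF c(1)] g unfolding gram_def X_def by simp
  have Q: "projQ B {i} = prj X" unfolding X_def by (rule projQ_prj, use g nz \<beta>_def in simp)
  have dX: "det (transpose_mat X * X) \<noteq> 0" using g nz unfolding gram_def X_def \<beta>_def by simp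
  show Qc: "projQ B {i} \<in> carrier_mat n n" unfolding Q by (rule prj_props(1)[OF c(1) dX])
  have b: "col B i \<in> carrier_vec n" by (rule col_carrier_vec[OF i B])
  have Bd: "dim_row B = n" "dim_col B = dB" using B by auto
  show Qv: "projQ B {i} *\<^sub>v u = u - ((col B i \<bullet> u) / (col B i \<bullet> col B i)) \<cdot>\<^sub>v col B i"
    if u: "u \<in> carrier_vec n" for u
  proof (rule eq_vecI)
    fix r assume "r < dim_vec (u - ((col B i \<bullet> u) / (col B i \<bullet> col B i)) \<cdot>\<^sub>v col B i)"
    hence r: "r < n" using u Bd by simp
    have "(projQ B {i} *\<^sub>v u) $ r = (\<Sum>s\<in>{0..<n}. prj X $$ (r, s) * u $ s)"
      using Qc r u unfolding Q by (simp add: scalar_prod_def)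
    also have "\<dots> = (\<Sum>s\<in>{0..<n}. (if r = s then u $ s else 0) - col B i $ r / \<beta> * (col B i $ s * u $ s))"
    proof (rule sum.cong[OF refl])
      fix s assume "s \<in> {0..<n}" hence s: "s < n" by simp
      have "prj X $$ (r, s) = (if r = s then 1 else 0) - X $$ (r,0) * X $$ (s,0) / \<beta>"
        by (rule prj_col_entry[OF c(1) XX _ r s], use nz \<beta>_def in simp)
      also have "X $$ (r,0) = col B i $ r" using c(2)[OF r] B r i by simp
      also have "X $$ (s,0) = col B i $ s" using c(2)[OF s] B s i by simp
      finally have e: "prj X $$ (r, s) = (if r = s then 1 else 0) - col B i $ r * col B i $ s / \<beta>" .
      show "prj X $$ (r, s) * u $ s = (if r = s then u $ s else 0) - col B i $ r / \<beta> * (col B i $ s * u $ s)"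
        unfolding e by (cases "r = s", simp_all add: algebra_simps)
    qed
    also have "\<dots> = u $ r - col B i $ r / \<beta> * (col B i \<bullet> u)"
      using r u B Bd i by (simp add: sum_subtractf scalar_prod_def sum_divide_distrib[symmetric] sum_distrib_left)
    also have "\<dots> = (u - ((col B i \<bullet> u) / (col B i \<bullet> col B i)) \<cdot>\<^sub>v col B i) $ r"
      using r u B unfolding \<beta>_def by simp
    finally show "(projQ B {i} *\<^sub>v u) $ r = (u - ((col B i \<bullet> u) / (col B i \<bullet> col B i)) \<cdot>\<^sub>v col B i) $ r" .
  qed (use Qc u Bd in simp)
  show "projQ B {i} *\<^sub>v col B i = 0\<^sub>v n"
    using Qv[OF b] nz b by simp
qed


lemma pick_remove:
  assumes fT: "finite T" and iT: "i \<in> T" and a: "a < card T - 1"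
  shows "pick (T - {i}) a = pick T (ins (card {x\<in>T. x < i}) a)"
proof -
  define p where "p = card {x\<in>T. x < i}"
  define q where "q = ins p a"
  have qk: "q < card T" using a unfolding q_def ins_def by auto
  define j where "j = pick T q"
  have jT: "j \<in> T" unfolding j_def using qk by (intro pick_in_set, simp)
  have cj: "card {x\<in>T. x < j} = q" unfolding j_def using qk by (intro card_pick, simp)
  have pi: "pick T p = i" unfolding p_def by (rule pick_card_in_set[OF iT])
  have qp: "q \<noteq> p" unfolding q_def ins_def by auto
  have ji: "j \<noteq> i" using cj qp unfolding p_def by auto
  have "card {x\<in>T - {i}. x < j} = a"
  proof (cases "i < j")
    case True
    have e: "{x\<in>T - {i}. x < j} = {x\<in>T. x < j} - {i}" by auto
    have "card {x\<in>T - {i}. x < j} = q - 1" unfolding e using True iT fT cj by (subst card_Diff_singleton, auto)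
    moreover have "p < q"
    proof -
      have "{x\<in>T. x < i} \<subset> {x\<in>T. x < j}" using True iT by auto
      thus ?thesis unfolding p_def cj[symmetric] using fT by (intro psubset_card_mono, auto)
    qed
    ultimately show ?thesis unfolding q_def ins_def by (auto split: if_splits)
  next
    case False
    hence Ji: "j < i" using ji by auto
    have e: "{x\<in>T - {i}. x < j} = {x\<in>T. x < j}" using Ji by auto
    have "q < p"
    proof -
      have "{x\<in>T. x < j} \<subset> {x\<in>T. x < i}" using Ji jT by auto
      thus ?thesis unfolding p_def cj[symmetric] using fT by (intro psubset_card_mono, auto)
    qed
    thus ?thesis unfolding e cj using qp unfolding q_def ins_def by (auto split: if_splits)
  qed
  hence "pick (T - {i}) a = pick (T - {i}) (card {x\<in>T - {i}. x < j})" by simp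
  also have "\<dots> = j" using jT ji by (intro pick_card_in_set, auto)
  finally show ?thesis unfolding j_def q_def p_def .
qed


lemma colsub_carrier_card:
  assumes B: "B \<in> carrier_mat n m" and S: "S \<subseteq> {..<m}"
  shows "colsub B S \<in> carrier_mat n (card S)"
proof (rule carrier_matI)
  show "dim_row (colsub B S) = n" using B by simp
  have "dim_col (colsub B S) = card {j. j < dim_col B \<and> j \<in> S}" by (rule colsub_dim(2))
  also have "\<dots> = card S" using B S by (intro card_sub, auto)
  finally show "dim_col (colsub B S) = card S" .
qed

lemma gram_entry:
  assumes B: "B \<in> carrier_mat n m" and S: "S \<subseteq> {..<m}" and a: "a < card S" and c: "c < card S"
  shows "(transpose_mat (colsub B S) * colsub B S) $$ (a, c) = col B (pick S a) \<bullet> col B (pick S c)"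
proof -
  note N = colsub_carrier_card[OF B S]
  have "(transpose_mat (colsub B S) * colsub B S) $$ (a, c) = row (transpose_mat (colsub B S)) a \<bullet> col (colsub B S) c"
    using N a c by (subst index_mult_mat(1), auto)
  also have "row (transpose_mat (colsub B S)) a = col (colsub B S) a" by (rule row_transpose, simp only: carrier_matD(2)[OF N] a)
  also have "col (colsub B S) a = col B (pick S a)" by (rule col_colsub, simp only: carrier_matD(2)[OF N] a)
  also have "col (colsub B S) c = col B (pick S c)" by (rule col_colsub, simp only: carrier_matD(2)[OF N] c)
  finally show ?thesis .
qed

lemma gram_carrier:
  assumes B: "B \<in> carrier_mat n m" and S: "S \<subseteq> {..<m}"
  shows "transpose_mat (colsub B S) * colsub B S \<in> carrier_mat (card S) (card S)"
  using colsub_carrier_card[OF B S] by auto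

lemma gram_split:
  assumes B: "B \<in> carrier_mat n dB" and T: "T \<subseteq> {..<dB}" and iT: "i \<in> T"
  shows "gram B T = (col B i \<bullet> col B i) * gram (projQ B {i} * B) (T - {i})"
proof -
  define \<beta> where "\<beta> = col B i \<bullet> col B i"
  define k where "k = card T"
  define p where "p = card {x\<in>T. x < i}"
  have fT: "finite T" using T finite_subset by blast
  have i: "i < dB" using T iT by auto
  have pk: "p < k" unfolding p_def k_def using iT fT by (intro psubset_card_mono, auto)
  have pi: "pick T p = i" unfolding p_def by (rule pick_card_in_set[OF iT])
  define G where "G = transpose_mat (colsub B T) * colsub B T"
  have Gc: "G \<in> carrier_mat k k" unfolding G_def k_def by (rule gram_carrier[OF B T])
  have Ge: "G $$ (a,c) = col B (pick T a) \<bullet> col B (pick T c)" if "a < k" "c < k" for a c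
    unfolding G_def by (rule gram_entry[OF B T], use that k_def in auto)
  have pT: "pick T a \<in> T" if "a < k" for a using that unfolding k_def by (intro pick_in_set, simp)
  have pd: "pick T a < dB" if "a < k" for a using pT[OF that] T by auto
  have colc: "col B j \<in> carrier_vec n" if "j < dB" for j by (rule col_carrier_vec[OF that B])
  have bc: "col B i \<in> carrier_vec n" by (rule colc[OF i])
  show ?thesis
  proof (cases "\<beta> = 0")
    case True
    hence b0: "col B i = 0\<^sub>v n" using sp_self_zero[OF bc] unfolding \<beta>_def by simp
    have "det G = 0"
    proof (rule det_zero_col[OF Gc pk])
      fix r assume r: "r < k"
      show "G $$ (r, p) = 0" unfolding Ge[OF r pk] pi b0 using colc[OF pd[OF r]] by simp
    qed
    thus ?thesis unfolding gram_def G_def[symmetric] using True unfolding \<beta>_def by simp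
  next
    case False
    note Q = Qi_facts[OF B i False[unfolded \<beta>_def]]
    define B' where "B' = projQ B {i} * B"
    have B'c: "B' \<in> carrier_mat n dB" unfolding B'_def using Q(1) B by auto
    define T' where "T' = T - {i}"
    have T': "T' \<subseteq> {..<dB}" unfolding T'_def using T by auto
    have cT': "card T' = k - 1" unfolding T'_def k_def using fT iT by simp
    define G' where "G' = transpose_mat (colsub B' T') * colsub B' T'"
    have G'c: "G' \<in> carrier_mat (k - 1) (k - 1)" unfolding G'_def cT'[symmetric] by (rule gram_carrier[OF B'c T'])
    have colB': "col B' j = projQ B {i} *\<^sub>v col B j" if "j < dB" for j
      unfolding B'_def using that B by (intro col_mult_gen, simp)
    have G'e: "G' $$ (a,c) = G $$ (ins p a, ins p c) - G $$ (ins p a, p) * G $$ (p, ins p c) / \<beta>"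
      if a: "a < k - 1" and c: "c < k - 1" for a c
    proof -
      have ia: "ins p a < k" "ins p c < k" using a c pk unfolding ins_def by auto
      have pa: "pick T' a = pick T (ins p a)" "pick T' c = pick T (ins p c)"
        unfolding T'_def p_def using a c fT iT k_def by (intro pick_remove, auto)+
      define u where "u = col B (pick T (ins p a))"
      define w where "w = col B (pick T (ins p c))"
      have u: "u \<in> carrier_vec n" unfolding u_def by (rule colc[OF pd[OF ia(1)]])
      have w: "w \<in> carrier_vec n" unfolding w_def by (rule colc[OF pd[OF ia(2)]])
      have "G' $$ (a,c) = col B' (pick T' a) \<bullet> col B' (pick T' c)"
        unfolding G'_def by (rule gram_entry[OF B'c T'], use a c cT' in auto)
      also have "\<dots> = (projQ B {i} *\<^sub>v u) \<bullet> (projQ B {i} *\<^sub>v w)"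
        unfolding pa u_def w_def using colB' pd ia by simp
      also have "\<dots> = (u - ((col B i \<bullet> u) / \<beta>) \<cdot>\<^sub>v col B i) \<bullet> (w - ((col B i \<bullet> w) / \<beta>) \<cdot>\<^sub>v col B i)"
        unfolding Q(2)[OF u] Q(2)[OF w] \<beta>_def ..
      also have "\<dots> = u \<bullet> w - (col B i \<bullet> u) * (col B i \<bullet> w) / \<beta>"
        by (rule sp_formula[OF u w bc], use False \<beta>_def in auto)
      also have "col B i \<bullet> u = u \<bullet> col B i" by (rule comm_scalar_prod[OF bc u])
      finally show ?thesis unfolding Ge[OF ia(1) ia(2)] Ge[OF ia(1) pk] Ge[OF pk ia(2)] pi u_def w_def .
    qed
    have Gpp: "G $$ (p,p) = \<beta>" unfolding Ge[OF pk pk] pi \<beta>_def ..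
    have "det G = \<beta> * det G'" by (rule det_schur1[OF Gc pk Gpp False G'c G'e])
    thus ?thesis unfolding gram_def G_def[symmetric] G'_def[symmetric] \<beta>_def[symmetric] B'_def[symmetric] T'_def[symmetric] .
  qed
qed


lemma colsub_carrier: "B \<in> carrier_mat n m \<Longrightarrow> colsub B S \<in> carrier_mat n (dim_col (colsub B S))"
  by auto

lemma proj_comp:
  assumes B: "B \<in> carrier_mat n dB" and iT: "i \<in> T"
    and g: "gram B T \<noteq> 0" and gi: "gram B {i} \<noteq> 0" and g': "gram (projQ B {i} * B) (T - {i}) \<noteq> 0"
  shows "projQ B T = projQ (projQ B {i} * B) (T - {i}) * projQ B {i}"
proof -
  define bi where "bi = colsub B {i}"
  define N where "N = colsub B T"
  define M where "M = colsub B (T - {i})"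
  define Qi where "Qi = projQ B {i}"
  define N' where "N' = colsub (Qi * B) (T - {i})"
  define Q' where "Q' = projQ (Qi * B) (T - {i})"
  define PT where "PT = projQ B T"
  define R where "R = Q' * Qi"
  define t1 where "t1 = dim_col bi"
  define tN where "tN = dim_col N"
  define tM where "tM = dim_col M"
  have bic: "bi \<in> carrier_mat n t1" unfolding bi_def t1_def using B by auto
  have Nc: "N \<in> carrier_mat n tN" unfolding N_def tN_def using B by auto
  have Mc: "M \<in> carrier_mat n tM" unfolding M_def tM_def using B by auto
  have Qip: "Qi = prj bi" unfolding Qi_def bi_def by (rule projQ_prj[OF gi])
  note QiP = prj_props[OF bic gi[unfolded gram_def, folded bi_def], folded Qip]
  have N'M: "N' = Qi * M" unfolding N'_def M_def using QiP(1) B by (simp add: colsub_mult)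
  have N'c: "N' \<in> carrier_mat n tM" unfolding N'M by (rule mult_carrier_mat[OF QiP(1) Mc])
  have Q'p: "Q' = prj N'" unfolding Q'_def N'_def by (rule projQ_prj[OF g'[folded Qi_def]])
  have g'': "det (transpose_mat N' * N') \<noteq> 0" using g' unfolding gram_def N'_def Qi_def .
  note Q'P = prj_props[OF N'c g'', folded Q'p]
  have PTp: "PT = prj N" unfolding PT_def N_def by (rule projQ_prj[OF g])
  note PTP = prj_props[OF Nc g[unfolded gram_def, folded N_def], folded PTp]
  have dB: "dim_col B = dB" "dim_row B = n" using B by auto
  have killT: "\<forall>j\<in>T. j < dim_col B \<longrightarrow> PT *\<^sub>v col B j = 0\<^sub>v n"
    using kills_iff[of PT B T] PTP(1,3) B unfolding N_def tN_def by auto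
  have "PT * bi = 0\<^sub>m n t1"
    using kills_iff[of PT B "{i}"] killT iT PTP(1) B unfolding bi_def t1_def by auto
  hence a: "PT * Qi = PT" unfolding Qip by (rule prj_absorb[OF PTP(1) bic])
  have "PT * M = 0\<^sub>m n tM"
    using kills_iff[of PT B "T - {i}"] killT PTP(1) B unfolding M_def tM_def by auto
  hence b: "PT * N' = 0\<^sub>m n tM" unfolding N'M using a
    by (simp add: assoc_mult_mat[symmetric, OF PTP(1) QiP(1) Mc])
  have c: "PT * Q' = PT" unfolding Q'p by (rule prj_absorb[OF PTP(1) N'c b])
  have PR1: "PT * R = PT" unfolding R_def using c a by (simp add: assoc_mult_mat[symmetric, OF PTP(1) Q'P(1) QiP(1)])
  have QiN': "Qi * N' = N'" unfolding N'M using QiP(4) by (simp add: assoc_mult_mat[symmetric, OF QiP(1) QiP(1) Mc])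
  have comm: "Qi * Q' = Q' * Qi" unfolding Q'p by (rule prj_comm[OF QiP(1,2) N'c QiN'])
  have Rc: "R \<in> carrier_mat n n" unfolding R_def using QiP(1) Q'P(1) by auto
  have Rs: "transpose_mat R = R" unfolding R_def using QiP(2) Q'P(2) comm
    by (simp add: transpose_mult[OF Q'P(1) QiP(1)])
  have "R * N = 0\<^sub>m n tN"
  proof -
    have "R * bi = Q' * (Qi * bi)" unfolding R_def by (rule assoc_mult_mat[OF Q'P(1) QiP(1) bic])
    hence Rbi: "R * bi = 0\<^sub>m n t1" using QiP(3) Q'P(1) by simp
    have "R * M = Q' * N'" unfolding R_def N'M by (rule assoc_mult_mat[OF Q'P(1) QiP(1) Mc])
    hence RM: "R * M = 0\<^sub>m n tM" using Q'P(3) by simp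
    have k1: "\<forall>j\<in>{i}. j < dim_col B \<longrightarrow> R *\<^sub>v col B j = 0\<^sub>v n"
      using kills_iff[of R B "{i}"] Rbi Rc B unfolding bi_def t1_def by auto
    have k2: "\<forall>j\<in>T-{i}. j < dim_col B \<longrightarrow> R *\<^sub>v col B j = 0\<^sub>v n"
      using kills_iff[of R B "T-{i}"] RM Rc B unfolding M_def tM_def by auto
    have "\<forall>j\<in>T. j < dim_col B \<longrightarrow> R *\<^sub>v col B j = 0\<^sub>v n" using k1 k2 by blast
    thus ?thesis using kills_iff[of R B T] Rc B unfolding N_def tN_def by auto
  qed
  hence "PT * R = R" by (rule prj_absorb2[OF Rc Rs Nc, folded PTp])
  with PR1 have "R = PT" by simp
  thus ?thesis unfolding R_def PT_def Q'_def Qi_def by simp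
qed


lemma gram_zero_col:
  assumes B: "B \<in> carrier_mat n m" and S: "S \<subseteq> {..<m}" and jS: "j \<in> S" and z: "col B j = 0\<^sub>v n"
  shows "gram B S = 0"
proof -
  define k where "k = card S"
  define q where "q = card {x\<in>S. x < j}"
  have fS: "finite S" using S finite_subset by blast
  have qk: "q < k" unfolding q_def k_def using jS fS by (intro psubset_card_mono, auto)
  have pj: "pick S q = j" unfolding q_def by (rule pick_card_in_set[OF jS])
  define G where "G = transpose_mat (colsub B S) * colsub B S"
  have Gc: "G \<in> carrier_mat k k" unfolding G_def k_def by (rule gram_carrier[OF B S])
  have "det G = 0"
  proof (rule det_zero_col[OF Gc qk])
    fix r assume r: "r < k"
    have pS: "pick S r \<in> S" using r unfolding k_def by (intro pick_in_set, simp)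
    have pd: "pick S r < m" using pS S by auto
    have "G $$ (r, q) = col B (pick S r) \<bullet> col B (pick S q)"
      unfolding G_def by (rule gram_entry[OF B S], use r qk k_def in auto)
    also have "\<dots> = 0" unfolding pj z using col_carrier_vec[OF pd B] by simp
    finally show "G $$ (r, q) = 0" .
  qed
  thus ?thesis unfolding gram_def G_def .
qed

lemma pTU_alt: "pTU T U x A B C = det (x \<cdot>\<^sub>m 1\<^sub>m (dim_col A) -
   transpose_mat (projQ B T * A * projP C U) * (projQ B T * A * projP C U))"
  unfolding pTU_def Let_def ..

lemma projQ_carrier:
  assumes B: "B \<in> carrier_mat n m" and S: "S \<subseteq> {..<m}" and g: "gram B S \<noteq> 0"
  shows "projQ B S \<in> carrier_mat n n" "transpose_mat (projQ B S) = projQ B S"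
proof -
  have e: "projQ B S = prj (colsub B S)" by (rule projQ_prj[OF g])
  note c = colsub_carrier_card[OF B S]
  have d: "det (transpose_mat (colsub B S) * colsub B S) \<noteq> 0" using g unfolding gram_def .
  show "projQ B S \<in> carrier_mat n n" unfolding e by (rule prj_props(1)[OF c d])
  show "transpose_mat (projQ B S) = projQ B S" unfolding e by (rule prj_props(2)[OF c d])
qed

lemma pairB:
  assumes A: "A \<in> carrier_mat n d" and B: "B \<in> carrier_mat n dB" and T: "T \<subseteq> {..<dB}" and iT: "i \<in> T"
  shows "gram B T * pTU T U x A B C = (col B i \<bullet> col B i) *
     (gram (projQ B {i} * B) (T - {i}) * pTU (T - {i}) U x (projQ B {i} * A) (projQ B {i} * B) C)"
proof (cases "gram B T = 0")
  case True
  have e: "(col B i \<bullet> col B i) * gram (projQ B {i} * B) (T - {i}) = 0"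
    using gram_split[OF B T iT] True by simp
  show ?thesis unfolding mult.assoc[symmetric] e True by simp
next
  case False
  define \<beta> where "\<beta> = col B i \<bullet> col B i"
  define Qi where "Qi = projQ B {i}"
  have sp: "gram B T = \<beta> * gram (Qi * B) (T - {i})" unfolding \<beta>_def Qi_def by (rule gram_split[OF B T iT])
  have b0: "\<beta> \<noteq> 0" and g': "gram (Qi * B) (T - {i}) \<noteq> 0" using False sp by auto
  have i: "i < dB" using T iT by auto
  have gi: "gram B {i} \<noteq> 0" using gram_single[OF B i] b0 unfolding \<beta>_def by simp
  have Qic: "Qi \<in> carrier_mat n n" unfolding Qi_def by (rule Qi_facts(1)[OF B i b0[unfolded \<beta>_def]])
  have B'c: "Qi * B \<in> carrier_mat n dB" using Qic B by auto
  have T': "T - {i} \<subseteq> {..<dB}" using T by auto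
  define Q' where "Q' = projQ (Qi * B) (T - {i})"
  have Q'c: "Q' \<in> carrier_mat n n" unfolding Q'_def by (rule projQ_carrier(1)[OF B'c T' g'])
  have pc: "projQ B T = Q' * Qi" unfolding Q'_def Qi_def
    by (rule proj_comp[OF B iT False gi g'[unfolded Qi_def]])
  have "projQ B T * A = Q' * (Qi * A)" unfolding pc by (rule assoc_mult_mat[OF Q'c Qic A])
  moreover have "dim_col (Qi * A) = dim_col A" by simp
  ultimately have "pTU T U x A B C = pTU (T - {i}) U x (Qi * A) (Qi * B) C"
    unfolding pTU_alt Q'_def by simp
  thus ?thesis unfolding sp \<beta>_def[symmetric] Qi_def[symmetric] by simp
qed


lemma comb:
  fixes F :: "nat set \<Rightarrow> real" and H :: "nat \<Rightarrow> nat set \<Rightarrow> real" and w :: "nat \<Rightarrow> real"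
  assumes k: "1 \<le> k"
    and h1: "\<And>T i. T \<subseteq> {..<m} \<Longrightarrow> card T = k \<Longrightarrow> i \<in> T \<Longrightarrow> F T = w i * H i (T - {i})"
    and h2: "\<And>T i. T \<subseteq> {..<m} \<Longrightarrow> card T = k - 1 \<Longrightarrow> i \<in> T \<Longrightarrow> w i * H i T = 0"
  shows "(\<Sum>T\<in>{T. T \<subseteq> {..<m} \<and> card T = k}. F T) =
    1 / real k * (\<Sum>i<m. w i * (\<Sum>T\<in>{T. T \<subseteq> {..<m} \<and> card T = k - 1}. H i T))"
proof -
  define Sk where "Sk = {T. T \<subseteq> {..<m} \<and> card T = k}"
  define Sk1 where "Sk1 = {T. T \<subseteq> {..<m} \<and> card T = k - 1}"
  have fSk: "finite Sk" unfolding Sk_def by (rule finite_subset[of _ "Pow {..<m}"], auto)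
  have fSk1: "finite Sk1" unfolding Sk1_def by (rule finite_subset[of _ "Pow {..<m}"], auto)
  have step: "w i * (\<Sum>T\<in>Sk1. H i T) = (\<Sum>T\<in>Sk. if i \<in> T then F T else 0)" if i: "i < m" for i
  proof -
    have "w i * (\<Sum>T\<in>Sk1. H i T) = (\<Sum>T\<in>Sk1. w i * H i T)" by (simp add: sum_distrib_left)
    also have "\<dots> = (\<Sum>T\<in>{T\<in>Sk1. i \<notin> T}. w i * H i T)"
      using fSk1 h2 unfolding Sk1_def by (intro sum.mono_neutral_right, auto)
    also have "\<dots> = (\<Sum>T\<in>{T\<in>Sk. i \<in> T}. F T)"
    proof (rule sum.reindex_bij_witness[of _ "\<lambda>T. T - {i}" "\<lambda>T. insert i T"])
      fix T assume T: "T \<in> {T\<in>Sk1. i \<notin> T}"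
      show "insert i T - {i} = T" using T by auto
    next
      fix T assume T: "T \<in> {T\<in>Sk1. i \<notin> T}"
      have fT: "finite T" using T unfolding Sk1_def by (auto intro: finite_subset)
      show "insert i T \<in> {T\<in>Sk. i \<in> T}" using T i fT k unfolding Sk_def Sk1_def by auto
    next
      fix T assume T: "T \<in> {T\<in>Sk. i \<in> T}"
      show "insert i (T - {i}) = T" using T by auto
    next
      fix T assume T: "T \<in> {T\<in>Sk. i \<in> T}"
      show "T - {i} \<in> {T\<in>Sk1. i \<notin> T}" using T unfolding Sk_def Sk1_def by auto
    next
      fix T assume T: "T \<in> {T\<in>Sk1. i \<notin> T}"
      have fT: "finite T" using T unfolding Sk1_def by (auto intro: finite_subset)
      have "insert i T \<in> Sk" using T i fT k unfolding Sk_def Sk1_def by auto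
      hence "F (insert i T) = w i * H i (insert i T - {i})" unfolding Sk_def by (intro h1, auto)
      also have "insert i T - {i} = T" using T by auto
      finally show "F (insert i T) = w i * H i T" .
    qed
    also have "\<dots> = (\<Sum>T\<in>Sk. if i \<in> T then F T else 0)"
      using fSk by (simp add: sum.inter_filter)
    finally show ?thesis .
  qed
  have "(\<Sum>i<m. w i * (\<Sum>T\<in>Sk1. H i T)) = (\<Sum>i<m. \<Sum>T\<in>Sk. if i \<in> T then F T else 0)"
    using step by simp
  also have "\<dots> = (\<Sum>T\<in>Sk. \<Sum>i<m. if i \<in> T then F T else 0)" by (rule sum.swap)
  also have "\<dots> = (\<Sum>T\<in>Sk. real k * F T)"
  proof (rule sum.cong[OF refl])
    fix T assume T: "T \<in> Sk"
    have "(\<Sum>i<m. if i \<in> T then F T else 0) = (\<Sum>i\<in>{..<m} \<inter> T. F T)"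
      by (rule sum.inter_restrict[symmetric], simp)
    also have "{..<m} \<inter> T = T" using T unfolding Sk_def by auto
    finally show "(\<Sum>i<m. if i \<in> T then F T else 0) = real k * F T" using T unfolding Sk_def by simp
  qed
  also have "\<dots> = real k * (\<Sum>T\<in>Sk. F T)" by (simp add: sum_distrib_left)
  finally have "(\<Sum>i<m. w i * (\<Sum>T\<in>Sk1. H i T)) = real k * (\<Sum>T\<in>Sk. F T)" .
  thus ?thesis unfolding Sk_def[symmetric] Sk1_def[symmetric] using k by simp
qed


lemma identB:
  assumes A: "A \<in> carrier_mat n d" and B: "B \<in> carrier_mat n dB" and C: "C \<in> carrier_mat nC d"
    and k: "1 \<le> k"
  shows "Pkr k r x A B C = 1 / real k * (\<Sum>i<dB. (col B i \<bullet> col B i) *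
               Pkr (k - 1) r x (projQ B {i} * A) (projQ B {i} * B) C)"
proof -
  define SU where "SU = {U. U \<subseteq> {..<nC} \<and> card U = r}"
  define Sk where "Sk = {T. T \<subseteq> {..<dB} \<and> card T = k}"
  define Sk1 where "Sk1 = {T. T \<subseteq> {..<dB} \<and> card T = k - 1}"
  define dC where "dC U = det (rowsub C U * transpose_mat (rowsub C U))" for U
  define F where "F U T = dC U * (gram B T * pTU T U x A B C)" for U T
  define H where "H U i T' = dC U * (gram (projQ B {i} * B) T' *
      pTU T' U x (projQ B {i} * A) (projQ B {i} * B) C)" for U i T'
  define w where "w i = col B i \<bullet> col B i" for i
  have dims: "dim_row C = nC" "dim_col B = dB" using B C by auto
  have L: "Pkr k r x A B C = (\<Sum>U\<in>SU. \<Sum>T\<in>Sk. F U T)"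
    unfolding Pkr_def dims SU_def Sk_def F_def dC_def gram_def by (simp add: mult.assoc)
  have R: "w i * Pkr (k - 1) r x (projQ B {i} * A) (projQ B {i} * B) C =
     w i * (\<Sum>U\<in>SU. \<Sum>T\<in>Sk1. H U i T)" if i: "i < dB" for i
  proof (cases "w i = 0")
    case False
    have Qc: "projQ B {i} \<in> carrier_mat n n" by (rule Qi_facts(1)[OF B i False[unfolded w_def]])
    have "dim_col (projQ B {i} * B) = dB" using Qc B by simp
    thus ?thesis unfolding Pkr_def dims SU_def Sk1_def H_def dC_def gram_def by (simp add: mult.assoc)
  qed simp
  have per: "(\<Sum>T\<in>Sk. F U T) = 1 / real k * (\<Sum>i<dB. w i * (\<Sum>T\<in>Sk1. H U i T))" for U
    unfolding Sk_def Sk1_def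
  proof (rule comb[OF k])
    fix T i assume T: "T \<subseteq> {..<dB}" and "card T = k" and iT: "i \<in> T"
    show "F U T = w i * H U i (T - {i})" unfolding F_def H_def w_def
      using pairB[OF A B T iT, of U x C] by (simp add: algebra_simps)
  next
    fix T i assume T: "T \<subseteq> {..<dB}" and "card T = k - 1" and iT: "i \<in> T"
    have i: "i < dB" using T iT by auto
    show "w i * H U i T = 0"
    proof (cases "w i = 0")
      case False
      note Q = Qi_facts[OF B i False[unfolded w_def]]
      have B'c: "projQ B {i} * B \<in> carrier_mat n dB" using Q(1) B by auto
      have "col (projQ B {i} * B) i = projQ B {i} *\<^sub>v col B i" using B i by (intro col_mult_gen, simp)
      hence "col (projQ B {i} * B) i = 0\<^sub>v n" using Q(3) by simp
      hence "gram (projQ B {i} * B) T = 0" by (rule gram_zero_col[OF B'c T iT])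
      thus ?thesis unfolding H_def by simp
    qed simp
  qed
  have "(\<Sum>U\<in>SU. \<Sum>T\<in>Sk. F U T) = (\<Sum>U\<in>SU. 1 / real k * (\<Sum>i<dB. w i * (\<Sum>T\<in>Sk1. H U i T)))"
    using per by simp
  also have "\<dots> = 1 / real k * (\<Sum>i<dB. w i * (\<Sum>U\<in>SU. \<Sum>T\<in>Sk1. H U i T))"
    by (simp add: sum_distrib_left sum.swap[of _ SU])
  also have "\<dots> = 1 / real k * (\<Sum>i<dB. w i * Pkr (k - 1) r x (projQ B {i} * A) (projQ B {i} * B) C)"
  proof -
    have "\<And>i. i \<in> {..<dB} \<Longrightarrow> w i * (\<Sum>U\<in>SU. \<Sum>T\<in>Sk1. H U i T) = w i * Pkr (k - 1) r x (projQ B {i} * A) (projQ B {i} * B) C"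
      by (rule R[symmetric], simp)
    hence "(\<Sum>i<dB. w i * (\<Sum>U\<in>SU. \<Sum>T\<in>Sk1. H U i T)) = (\<Sum>i<dB. w i * Pkr (k - 1) r x (projQ B {i} * A) (projQ B {i} * B) C)"
      by (rule sum.cong[OF refl])
    thus ?thesis by simp
  qed
  finally show ?thesis unfolding L w_def .
qed


lemma rowsub_t:
  assumes C: "C \<in> carrier_mat nC d"
  shows "rowsub C U = transpose_mat (colsub (transpose_mat C) U)"
proof (rule eq_matI)
  have dr: "dim_row (rowsub C U) = card {i. i < dim_row C \<and> i \<in> U}" unfolding rowsub_def dim_submatrix ..
  have dc: "dim_col (rowsub C U) = d" unfolding rowsub_def dim_submatrix using C by simp
  show "dim_row (rowsub C U) = dim_row (transpose_mat (colsub (transpose_mat C) U))" unfolding dr by simp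
  show "dim_col (rowsub C U) = dim_col (transpose_mat (colsub (transpose_mat C) U))" unfolding dc using C by simp
  fix a b assume a: "a < dim_row (transpose_mat (colsub (transpose_mat C) U))"
    and b: "b < dim_col (transpose_mat (colsub (transpose_mat C) U))"
  have a': "a < card {i. i < dim_row C \<and> i \<in> U}" using a by simp
  have b': "b < d" using b C by simp
  have pa: "pick U a < dim_row C" using a' by (rule pick_le)
  have "rowsub C U $$ (a, b) = C $$ (pick U a, pick UNIV b)"
    unfolding rowsub_def by (rule submatrix_index, use a' b' C in auto)
  also have "\<dots> = C $$ (pick U a, b)" unfolding pick_UNIV ..
  also have "\<dots> = transpose_mat (colsub (transpose_mat C) U) $$ (a, b)"
    using a b pa b' C by simp
  finally show "rowsub C U $$ (a, b) = transpose_mat (colsub (transpose_mat C) U) $$ (a, b)" .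
qed

lemma dC_gram:
  assumes C: "C \<in> carrier_mat nC d"
  shows "det (rowsub C U * transpose_mat (rowsub C U)) = gram (transpose_mat C) U"
  unfolding rowsub_t[OF C] gram_def by simp

lemma projP_Q:
  assumes C: "C \<in> carrier_mat nC d" and U: "U \<subseteq> {..<nC}" and g: "gram (transpose_mat C) U \<noteq> 0"
  shows "projP C U = projQ (transpose_mat C) U"
proof -
  have Ct: "transpose_mat C \<in> carrier_mat d nC" using C by simp
  define Y where "Y = colsub (transpose_mat C) U"
  have Y: "Y \<in> carrier_mat d (card U)" unfolding Y_def by (rule colsub_carrier_card[OF Ct U])
  have dY: "det (transpose_mat Y * Y) \<noteq> 0" using g unfolding gram_def Y_def .
  have YT: "transpose_mat Y \<in> carrier_mat (card U) d" using Y by simp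
  have "pinv (transpose_mat Y) = transpose_mat (transpose_mat Y) * invm (transpose_mat Y * transpose_mat (transpose_mat Y))"
    by (rule pinv_row[OF YT], use dY in simp)
  hence pr: "pinv (transpose_mat Y) = Y * invm (transpose_mat Y * Y)" by simp
  have pc: "pinv Y = invm (transpose_mat Y * Y) * transpose_mat Y" by (rule pinv_col[OF Y dY])
  have Gc: "invm (transpose_mat Y * Y) \<in> carrier_mat (card U) (card U)" by (rule invm(1)[OF _ dY], use Y in simp)
  have "projP C U = 1\<^sub>m d - Y * invm (transpose_mat Y * Y) * transpose_mat Y"
    unfolding projP_def rowsub_t[OF C] Y_def[symmetric] pr using C by simp
  also have "Y * invm (transpose_mat Y * Y) * transpose_mat Y = Y * pinv Y"
    unfolding pc by (rule assoc_mult_mat[OF Y Gc YT])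
  also have "1\<^sub>m d - Y * pinv Y = projQ (transpose_mat C) U"
    unfolding projQ_def Y_def[symmetric] using C by simp
  finally show ?thesis .
qed


lemma pairC:
  assumes A: "A \<in> carrier_mat n d" and B: "B \<in> carrier_mat n dB" and C: "C \<in> carrier_mat nC d"
    and T: "T \<subseteq> {..<dB}" and gT: "gram B T \<noteq> 0" and U: "U \<subseteq> {..<nC}" and iU: "i \<in> U"
  shows "det (rowsub C U * transpose_mat (rowsub C U)) * pTU T U x A B C =
     (row C i \<bullet> row C i) * (det (rowsub (C * projP C {i}) (U - {i}) * transpose_mat (rowsub (C * projP C {i}) (U - {i})))
       * pTU T (U - {i}) x (A * projP C {i}) B (C * projP C {i}))"
proof -
  define Ct where "Ct = transpose_mat C"
  have Ctc: "Ct \<in> carrier_mat d nC" unfolding Ct_def using C by simp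
  have i: "i < nC" using U iU by auto
  define \<gamma> where "\<gamma> = row C i \<bullet> row C i"
  have rc: "row C i = col Ct i" unfolding Ct_def using C i by simp
  have sp: "gram Ct U = \<gamma> * gram (projQ Ct {i} * Ct) (U - {i})" unfolding \<gamma>_def rc
    by (rule gram_split[OF Ctc U iU])
  have dCU: "det (rowsub C U * transpose_mat (rowsub C U)) = gram Ct U" unfolding Ct_def by (rule dC_gram[OF C])
  show ?thesis
  proof (cases "\<gamma> = 0")
    case True
    thus ?thesis unfolding dCU sp \<gamma>_def[symmetric] by simp
  next
    case False
    note Q = Qi_facts[OF Ctc i False[unfolded \<gamma>_def rc]]
    have gi: "gram Ct {i} \<noteq> 0" using gram_single[OF Ctc i] False unfolding \<gamma>_def rc by simp
    have Pi: "projP C {i} = projQ Ct {i}" unfolding Ct_def by (rule projP_Q[OF C _ gi[unfolded Ct_def]], use i in auto)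
    define P where "P = projQ Ct {i}"
    have Pc: "P \<in> carrier_mat d d" unfolding P_def by (rule Q(1))
    have Ps: "transpose_mat P = P" unfolding P_def by (rule projQ_carrier(2)[OF Ctc _ gi], use i in auto)
    have CP: "C * P \<in> carrier_mat nC d" using C Pc by auto
    have CPt: "transpose_mat (C * P) = P * Ct" unfolding Ct_def using transpose_mult[OF C Pc] Ps by simp
    have PCt: "P * Ct \<in> carrier_mat d nC" using Pc Ctc by auto
    define U' where "U' = U - {i}"
    have U': "U' \<subseteq> {..<nC}" unfolding U'_def using U by auto
    have dCU': "det (rowsub (C * P) U' * transpose_mat (rowsub (C * P) U')) = gram (P * Ct) U'"
      using dC_gram[OF CP] unfolding CPt .
    have sp2: "gram Ct U = \<gamma> * gram (P * Ct) U'" using sp unfolding P_def U'_def .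
    show ?thesis
    proof (cases "gram Ct U = 0")
      case True
      have e: "\<gamma> * gram (P * Ct) U' = 0" using sp2 True by simp
      show ?thesis unfolding Pi P_def[symmetric] U'_def[symmetric] dCU dCU' \<gamma>_def[symmetric] mult.assoc[symmetric] e True
        by simp
    next
      case False2: False
      have g': "gram (P * Ct) U' \<noteq> 0" using False2 sp2 by auto
      have PU: "projP C U = projQ Ct U" unfolding Ct_def by (rule projP_Q[OF C U False2[unfolded Ct_def]])
      have PU': "projP (C * P) U' = projQ (P * Ct) U'"
        using projP_Q[OF CP U' g'[folded CPt]] unfolding CPt .
      have pc: "projQ Ct U = projQ (P * Ct) U' * P" unfolding P_def U'_def
        by (rule proj_comp[OF Ctc iU False2 gi g'[unfolded P_def U'_def]])
      define P' where "P' = projQ (P * Ct) U'"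
      have P'c: "P' \<in> carrier_mat d d" unfolding P'_def by (rule projQ_carrier(1)[OF PCt U' g'])
      have P's: "transpose_mat P' = P'" unfolding P'_def by (rule projQ_carrier(2)[OF PCt U' g'])
      have PUs: "transpose_mat (projQ Ct U) = projQ Ct U" by (rule projQ_carrier(2)[OF Ctc U False2])
      have "projQ Ct U = transpose_mat (P' * P)" using PUs pc unfolding P'_def by simp
      also have "\<dots> = P * P'" using transpose_mult[OF P'c Pc] Ps P's by simp
      finally have PUe: "projP C U = P * P'" unfolding PU .
      define QT where "QT = projQ B T"
      have QTc: "QT \<in> carrier_mat n n" unfolding QT_def by (rule projQ_carrier(1)[OF B T gT])
      have QA: "QT * A \<in> carrier_mat n d" using QTc A by auto
      have "QT * A * (P * P') = QT * A * P * P'" by (rule assoc_mult_mat[symmetric, OF QA Pc P'c])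
      also have "QT * A * P = QT * (A * P)" by (rule assoc_mult_mat[OF QTc A Pc])
      finally have Me: "QT * A * projP C U = QT * (A * P) * projP (C * P) U'" unfolding PUe PU' P'_def .
      have "dim_col (A * P) = dim_col A" using A Pc by simp
      hence "pTU T U x A B C = pTU T U' x (A * P) B (C * P)"
        unfolding pTU_alt QT_def[symmetric] Me by simp
      thus ?thesis unfolding Pi P_def[symmetric] U'_def[symmetric] dCU dCU' sp2 \<gamma>_def[symmetric] by simp
    qed
  qed
qed


lemma identC:
  assumes A: "A \<in> carrier_mat n d" and B: "B \<in> carrier_mat n dB" and C: "C \<in> carrier_mat nC d"
    and r: "1 \<le> r"
  shows "Pkr k r x A B C = 1 / real r * (\<Sum>i<nC. (row C i \<bullet> row C i) *
               Pkr k (r - 1) x (A * projP C {i}) B (C * projP C {i}))"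
proof -
  define Sk where "Sk = {T. T \<subseteq> {..<dB} \<and> card T = k}"
  define SU where "SU = {U. U \<subseteq> {..<nC} \<and> card U = r}"
  define SU1 where "SU1 = {U. U \<subseteq> {..<nC} \<and> card U = r - 1}"
  define F where "F T U = gram B T * (det (rowsub C U * transpose_mat (rowsub C U)) * pTU T U x A B C)" for T U
  define H where "H T i U' = gram B T * (det (rowsub (C * projP C {i}) U' * transpose_mat (rowsub (C * projP C {i}) U'))
       * pTU T U' x (A * projP C {i}) B (C * projP C {i}))" for T i U'
  define w where "w i = row C i \<bullet> row C i" for i
  have dims: "dim_row C = nC" "dim_col B = dB" using B C by auto
  have dimsP: "dim_row (C * projP C {i}) = nC" for i using C by simp
  have L: "Pkr k r x A B C = (\<Sum>T\<in>Sk. \<Sum>U\<in>SU. F T U)"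
    unfolding Pkr_def dims SU_def Sk_def F_def gram_def by (subst sum.swap, simp add: algebra_simps)
  have R: "Pkr k (r - 1) x (A * projP C {i}) B (C * projP C {i}) = (\<Sum>T\<in>Sk. \<Sum>U\<in>SU1. H T i U)" for i
    unfolding Pkr_def dims dimsP SU1_def Sk_def H_def gram_def by (subst sum.swap, simp add: algebra_simps)
  have per: "(\<Sum>U\<in>SU. F T U) = 1 / real r * (\<Sum>i<nC. w i * (\<Sum>U\<in>SU1. H T i U))" if T: "T \<in> Sk" for T
    unfolding SU_def SU1_def
  proof (rule comb[OF r])
    have T': "T \<subseteq> {..<dB}" using T unfolding Sk_def by auto
    fix U i assume U: "U \<subseteq> {..<nC}" and "card U = r" and iU: "i \<in> U"
    show "F T U = w i * H T i (U - {i})"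
    proof (cases "gram B T = 0")
      case True thus ?thesis unfolding F_def H_def by simp
    next
      case False
      show ?thesis unfolding F_def H_def w_def
        using pairC[OF A B C T' False U iU, of x] by (simp add: algebra_simps)
    qed
  next
    fix U i assume U: "U \<subseteq> {..<nC}" and "card U = r - 1" and iU: "i \<in> U"
    have i: "i < nC" using U iU by auto
    show "w i * H T i U = 0"
    proof (cases "w i = 0")
      case False
      define Ct where "Ct = transpose_mat C"
      have Ctc: "Ct \<in> carrier_mat d nC" unfolding Ct_def using C by simp
      have rc: "row C i = col Ct i" unfolding Ct_def using C i by simp
      note Q = Qi_facts[OF Ctc i False[unfolded w_def rc]]
      have gi: "gram Ct {i} \<noteq> 0" using gram_single[OF Ctc i] False unfolding w_def rc by simp
      have Pi: "projP C {i} = projQ Ct {i}" unfolding Ct_def by (rule projP_Q[OF C _ gi[unfolded Ct_def]], use i in auto)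
      define P where "P = projQ Ct {i}"
      have Pc: "P \<in> carrier_mat d d" unfolding P_def by (rule Q(1))
      have Ps: "transpose_mat P = P" unfolding P_def by (rule projQ_carrier(2)[OF Ctc _ gi], use i in auto)
      have CP: "C * P \<in> carrier_mat nC d" using C Pc by auto
      have CPt: "transpose_mat (C * P) = P * Ct" unfolding Ct_def using transpose_mult[OF C Pc] Ps by simp
      have PCt: "P * Ct \<in> carrier_mat d nC" using Pc Ctc by auto
      have "col (P * Ct) i = P *\<^sub>v col Ct i" using Ctc i by (intro col_mult_gen, simp)
      hence "col (P * Ct) i = 0\<^sub>v d" using Q(3) unfolding P_def by simp
      hence "gram (P * Ct) U = 0" by (rule gram_zero_col[OF PCt U iU])
      hence "det (rowsub (C * P) U * transpose_mat (rowsub (C * P) U)) = 0"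
        using dC_gram[OF CP] unfolding CPt by simp
      thus ?thesis unfolding H_def Pi P_def[symmetric] by simp
    qed simp
  qed
  have "(\<Sum>T\<in>Sk. \<Sum>U\<in>SU. F T U) = (\<Sum>T\<in>Sk. 1 / real r * (\<Sum>i<nC. w i * (\<Sum>U\<in>SU1. H T i U)))"
    using per by simp
  also have "\<dots> = 1 / real r * (\<Sum>i<nC. w i * (\<Sum>T\<in>Sk. \<Sum>U\<in>SU1. H T i U))"
    by (simp add: sum_distrib_left sum.swap[of _ Sk])
  also have "\<dots> = 1 / real r * (\<Sum>i<nC. w i * Pkr k (r - 1) x (A * projP C {i}) B (C * projP C {i}))"
    unfolding R ..
  finally show ?thesis unfolding L w_def .
qed


theorem lemmaA4:
  fixes A B C :: "real mat" and n d dB nC k r :: nat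
  assumes "A \<in> carrier_mat n d" and "B \<in> carrier_mat n dB" and "C \<in> carrier_mat nC d"
    and "1 \<le> k" and "k \<le> vec_space.rank n B"
    and "1 \<le> r" and "r \<le> vec_space.rank nC C"
  shows "(\<forall>x. Pkr k r x A B C =
            1 / real k * (\<Sum>i<dB. (col B i \<bullet> col B i) *
               Pkr (k - 1) r x (projQ B {i} * A) (projQ B {i} * B) C))
       \<and> (\<forall>x. Pkr k r x A B C =
            1 / real r * (\<Sum>i<nC. (row C i \<bullet> row C i) *
               Pkr k (r - 1) x (A * projP C {i}) B (C * projP C {i})))"
proof (intro conjI allI)
  fix x
  show "Pkr k r x A B C =
            1 / real k * (\<Sum>i<dB. (col B i \<bullet> col B i) *
               Pkr (k - 1) r x (projQ B {i} * A) (projQ B {i} * B) C)"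
    by (rule identB[OF assms(1-4)])
next
  fix x
  show "Pkr k r x A B C =
            1 / real r * (\<Sum>i<nC. (row C i \<bullet> row C i) *
               Pkr k (r - 1) x (A * projP C {i}) B (C * projP C {i}))"
    by (rule identC[OF assms(1-3) assms(6)])
qed

end
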